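(* Let $V$ be a finite nonempty set and $U\subseteq V$. For every $x\in X_V$, the vector $x'\in\{0,1\}^{P_V}$ defined by $x'_{pq}=0$ if $pq\in U\times(V\setminus U)$ and $x'_{pq}=x_{pq}$ otherwise, satisfies $x'\in X_V$.
   Context: $P_V=\{pq\in V^2\mid p\neq q\}$. $X_V$ is the set of all $x\in\{0,1\}^{P_V}$ such that $x_{pq}+x_{qr}-x_{pr}\le 1$ for all pairwise distinct $p,q,r\in V$. *)

theory Defs
  imports Main
begin

definition P :: "'a set \<Rightarrow> ('a \<times> 'a) set" where
  "P V = {(p, q). p \<in> V \<and> q \<in> V \<and> p \<noteq> q}"

text \<open>Vectors in {0,1}^{P_V} are represented as functions on pairs, with
  values in {0,1} on P V and the fixed value 0 outside P V.\<close>
definition binvec :: "'a set \<Rightarrow> ('a \<times> 'a \<Rightarrow> int) set" where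
  "binvec V = {x. (\<forall>e\<in>P V. x e \<in> {0, 1}) \<and> (\<forall>e. e \<notin> P V \<longrightarrow> x e = 0)}"

definition X :: "'a set \<Rightarrow> ('a \<times> 'a \<Rightarrow> int) set" where
  "X V = {x \<in> binvec V. \<forall>p\<in>V. \<forall>q\<in>V. \<forall>r\<in>V.
            p \<noteq> q \<and> q \<noteq> r \<and> p \<noteq> r \<longrightarrow> x (p, q) + x (q, r) - x (p, r) \<le> 1}"

end

theory Submission
  imports Defs
begin

theorem lemma5p2:
  fixes V U :: "'a set" and x :: "'a \<times> 'a \<Rightarrow> int"
  assumes "finite V" and "V \<noteq> {}" and "U \<subseteq> V" and "x \<in> X V"
  shows "(\<lambda>(p, q). if (p, q) \<in> P V \<and> p \<in> U \<and> q \<in> V - U then 0 else x (p, q)) \<in> X V"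
proof -
  have b: "\<And>e. e \<in> P V \<Longrightarrow> x e \<in> {0,1}" and z: "\<And>e. e \<notin> P V \<Longrightarrow> x e = 0"
    and t: "\<And>p q r. p \<in> V \<Longrightarrow> q \<in> V \<Longrightarrow> r \<in> V \<Longrightarrow> p \<noteq> q \<Longrightarrow> q \<noteq> r \<Longrightarrow> p \<noteq> r
       \<Longrightarrow> x (p, q) + x (q, r) - x (p, r) \<le> 1"
    using assms(4) unfolding X_def binvec_def by auto
  show ?thesis
    unfolding X_def binvec_def
  proof (intro CollectI conjI ballI allI impI)
    fix p q r assume "p \<in> V" "q \<in> V" "r \<in> V" and d: "p \<noteq> q \<and> q \<noteq> r \<and> p \<noteq> r"
    then have "(p,q) \<in> P V" "(q,r) \<in> P V" "(p,r) \<in> P V" by (auto simp: P_def)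
    with b[of "(p,q)"] b[of "(q,r)"] b[of "(p,r)"] t[of p q r] d \<open>p \<in> V\<close> \<open>q \<in> V\<close> \<open>r \<in> V\<close>
    show "(\<lambda>(p, q). if (p, q) \<in> P V \<and> p \<in> U \<and> q \<in> V - U then 0 else x (p, q)) (p, q) +
          (\<lambda>(p, q). if (p, q) \<in> P V \<and> p \<in> U \<and> q \<in> V - U then 0 else x (p, q)) (q, r) -
          (\<lambda>(p, q). if (p, q) \<in> P V \<and> p \<in> U \<and> q \<in> V - U then 0 else x (p, q)) (p, r) \<le> 1"
      by auto
  next
    fix e :: "'a \<times> 'a" assume "e \<in> P V"
    then show "(\<lambda>(p, q). if (p, q) \<in> P V \<and> p \<in> U \<and> q \<in> V - U then 0 else x (p, q)) e \<in> {0, 1}"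
      using b[of e] by (cases e) auto
  next
    fix e :: "'a \<times> 'a" assume "e \<notin> P V"
    then show "(\<lambda>(p, q). if (p, q) \<in> P V \<and> p \<in> U \<and> q \<in> V - U then 0 else x (p, q)) e = 0"
      using z[of e] by (cases e) auto
  qed
qed

end
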